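(* Let $\Bbbk$ be any (commutative unital) ring, let $r\ge1$ and $d>r+1$ be integers, and let $\alpha(d,r)=(d-r,1^r)$. For every partition $\lambda$ of $d$ with $\lambda\trianglerighteq\alpha(d,r)$ there is an embedding $M^\lambda\subseteq M^{\alpha(d,r)}$ of left $\Bbbk W_d$-modules.
   Context: $W_d$ is the symmetric group on $\{1,\dots,d\}$; for a partition (or weak composition) $\lambda$ of $d$, $W_\lambda$ is the Young subgroup stabilising the rows of the tableau obtained by writing $1,\dots,d$ left to right along the rows of the Young diagram of $\lambda$, and $M^\lambda=\Bbbk W_d\otimes_{\Bbbk W_\lambda}\Bbbk$ is the permutation module. $\trianglerighteq$ is the dominance order on partitions. *)

theory Defs
  imports "HOL-Combinatorics.Permutations"
begin

definition is_partition :: "nat \<Rightarrow> nat list \<Rightarrow> bool" where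
  "is_partition d xs \<longleftrightarrow> sorted_wrt (\<ge>) xs \<and> 0 \<notin> set xs \<and> sum_list xs = d"

definition dominates :: "nat list \<Rightarrow> nat list \<Rightarrow> bool" where
  "dominates lam mu \<longleftrightarrow> (\<forall>k. sum_list (take k mu) \<le> sum_list (take k lam))"

definition alpha :: "nat \<Rightarrow> nat \<Rightarrow> nat list" where
  "alpha d r = (d - r) # replicate r 1"

text \<open>Row (0-based) of the entry j (1 \<le> j \<le> d) when 1..d is written left to right
  along the rows of the Young diagram of xs.\<close>
definition row_of :: "nat list \<Rightarrow> nat \<Rightarrow> nat" where
  "row_of xs j = (LEAST i. j \<le> sum_list (take (Suc i) xs))"

definition Sym :: "nat \<Rightarrow> (nat \<Rightarrow> nat) set" where
  "Sym d = {\<sigma>. \<sigma> permutes {1..d}}"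

definition young_subgroup :: "nat \<Rightarrow> nat list \<Rightarrow> (nat \<Rightarrow> nat) set" where
  "young_subgroup d xs = {\<sigma> \<in> Sym d. \<forall>j\<in>{1..d}. row_of xs (\<sigma> j) = row_of xs j}"

definition cosets :: "nat \<Rightarrow> nat list \<Rightarrow> (nat \<Rightarrow> nat) set set" where
  "cosets d xs = {(\<lambda>\<tau>. \<sigma> \<circ> \<tau>) ` young_subgroup d xs | \<sigma>. \<sigma> \<in> Sym d}"

text \<open>The permutation module M^lambda = kW_d \<otimes>_{kW_lambda} k, realised as the free
  k-module on the left cosets W_d/W_lambda (basis sigma \<otimes> 1 \<leftrightarrow> sigma W_lambda):
  an element is its coefficient function on cosets.\<close>
definition perm_module :: "nat \<Rightarrow> nat list \<Rightarrow> ((nat \<Rightarrow> nat) set \<Rightarrow> 'k::comm_ring_1) set" where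
  "perm_module d xs = {v. \<forall>C. C \<notin> cosets d xs \<longrightarrow> v C = 0}"

text \<open>Left action of sigma in W_d: sigma . e_C = e_{sigma C}.\<close>
definition perm_act :: "(nat \<Rightarrow> nat) \<Rightarrow> ((nat \<Rightarrow> nat) set \<Rightarrow> 'k::comm_ring_1) \<Rightarrow> ((nat \<Rightarrow> nat) set \<Rightarrow> 'k)" where
  "perm_act \<sigma> v = (\<lambda>C. v ((\<lambda>\<tau>. inv \<sigma> \<circ> \<tau>) ` C))"

text \<open>Homomorphism of left kW_d-modules M^lam \<rightarrow> M^mu: k-linear and W_d-equivariant
  (equivalent, since W_d spans kW_d).\<close>
definition kW_hom :: "nat \<Rightarrow> nat list \<Rightarrow> nat list
    \<Rightarrow> (((nat \<Rightarrow> nat) set \<Rightarrow> 'k::comm_ring_1) \<Rightarrow> ((nat \<Rightarrow> nat) set \<Rightarrow> 'k)) \<Rightarrow> bool" where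
  "kW_hom d lam mu \<phi> \<longleftrightarrow>
     (\<forall>v\<in>perm_module d lam. \<phi> v \<in> perm_module d mu) \<and>
     (\<forall>u\<in>perm_module d lam. \<forall>v\<in>perm_module d lam. \<phi> (\<lambda>C. u C + v C) = (\<lambda>C. \<phi> u C + \<phi> v C)) \<and>
     (\<forall>c. \<forall>v\<in>perm_module d lam. \<phi> (\<lambda>C. c * v C) = (\<lambda>C. c * \<phi> v C)) \<and>
     (\<forall>\<sigma>\<in>Sym d. \<forall>v\<in>perm_module d lam. \<phi> (perm_act \<sigma> v) = perm_act \<sigma> (\<phi> v))"

definition kW_embedding :: "nat \<Rightarrow> nat list \<Rightarrow> nat list
    \<Rightarrow> (((nat \<Rightarrow> nat) set \<Rightarrow> 'k::comm_ring_1) \<Rightarrow> ((nat \<Rightarrow> nat) set \<Rightarrow> 'k)) \<Rightarrow> bool" where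
  "kW_embedding d lam mu \<phi> \<longleftrightarrow> kW_hom d lam mu \<phi> \<and> inj_on \<phi> (perm_module d lam)"

end

theory Submission
  imports Defs
begin

lemma young_id: "id \<in> young_subgroup d xs"
  unfolding young_subgroup_def Sym_def by (simp add: permutes_id)

lemma young_comp:
  assumes "\<sigma> \<in> young_subgroup d xs" "\<tau> \<in> young_subgroup d xs"
  shows "\<sigma> \<circ> \<tau> \<in> young_subgroup d xs"
proof -
  have s: "\<sigma> permutes {1..d}" and t: "\<tau> permutes {1..d}"
    using assms unfolding young_subgroup_def Sym_def by auto
  have "\<forall>j\<in>{1..d}. row_of xs (\<sigma> (\<tau> j)) = row_of xs j"
  proof
    fix j assume j: "j \<in> {1..d}"
    then have "\<tau> j \<in> {1..d}" using permutes_in_image[OF t] by blast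
    then show "row_of xs (\<sigma> (\<tau> j)) = row_of xs j"
      using assms j unfolding young_subgroup_def by auto
  qed
  then show ?thesis using permutes_compose[OF t s]
    unfolding young_subgroup_def Sym_def by auto
qed

definition big :: "(nat \<Rightarrow> nat) set \<Rightarrow> (nat \<Rightarrow> nat) set \<Rightarrow> (nat \<Rightarrow> nat) set" where
  "big G D = (\<Union>\<sigma>\<in>D. (\<lambda>\<tau>. \<sigma> \<circ> \<tau>) ` G)"

lemma big_coset:
  assumes "young_subgroup d mu \<subseteq> young_subgroup d lam"
  shows "big (young_subgroup d lam) ((\<lambda>\<tau>. s \<circ> \<tau>) ` young_subgroup d mu)
         = (\<lambda>\<tau>. s \<circ> \<tau>) ` young_subgroup d lam"
proof
  show "big (young_subgroup d lam) ((\<lambda>\<tau>. s \<circ> \<tau>) ` young_subgroup d mu)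
         \<subseteq> (\<lambda>\<tau>. s \<circ> \<tau>) ` young_subgroup d lam"
  proof
    fix x assume "x \<in> big (young_subgroup d lam) ((\<lambda>\<tau>. s \<circ> \<tau>) ` young_subgroup d mu)"
    then obtain h g where h: "h \<in> young_subgroup d mu" and g: "g \<in> young_subgroup d lam"
      and x: "x = (s \<circ> h) \<circ> g" unfolding big_def by auto
    have "h \<circ> g \<in> young_subgroup d lam" using young_comp assms h g by blast
    moreover have "x = s \<circ> (h \<circ> g)" using x by (simp add: o_assoc)
    ultimately show "x \<in> (\<lambda>\<tau>. s \<circ> \<tau>) ` young_subgroup d lam" by blast
  qed
  show "(\<lambda>\<tau>. s \<circ> \<tau>) ` young_subgroup d lam
         \<subseteq> big (young_subgroup d lam) ((\<lambda>\<tau>. s \<circ> \<tau>) ` young_subgroup d mu)"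
  proof
    fix x assume "x \<in> (\<lambda>\<tau>. s \<circ> \<tau>) ` young_subgroup d lam"
    then obtain g where g: "g \<in> young_subgroup d lam" and x: "x = s \<circ> g" by auto
    have "s \<circ> id \<in> (\<lambda>\<tau>. s \<circ> \<tau>) ` young_subgroup d mu" using young_id by blast
    then show "x \<in> big (young_subgroup d lam) ((\<lambda>\<tau>. s \<circ> \<tau>) ` young_subgroup d mu)"
      unfolding big_def
    proof (rule UN_I)
      show "x \<in> (\<circ>) (s \<circ> id) ` young_subgroup d lam" using g x by simp
    qed
  qed
qed

lemma big_act: "big G ((\<lambda>\<tau>. f \<circ> \<tau>) ` D) = (\<lambda>\<tau>. f \<circ> \<tau>) ` big G D"
  unfolding big_def
proof (safe)
  fix a b assume "a \<in> D" "b \<in> G"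
  then show "(f \<circ> a) \<circ> b \<in> (\<circ>) f ` (\<Union>x\<in>D. (\<circ>) x ` G)"
    by (intro rev_image_eqI[of "a \<circ> b"]) (auto simp: o_assoc)
next
  fix a b assume "a \<in> D" "b \<in> G"
  then show "f \<circ> (a \<circ> b) \<in> (\<Union>x\<in>(\<circ>) f ` D. (\<circ>) x ` G)"
    by (auto simp: o_assoc)
qed

lemma Sym_inv: "\<sigma> \<in> Sym d \<Longrightarrow> inv \<sigma> \<in> Sym d"
  unfolding Sym_def by (simp add: permutes_inv)

lemma Sym_comp: "\<sigma> \<in> Sym d \<Longrightarrow> \<tau> \<in> Sym d \<Longrightarrow> \<sigma> \<circ> \<tau> \<in> Sym d"
  unfolding Sym_def by (simp add: permutes_compose)

lemma cosets_act:
  assumes "\<sigma> \<in> Sym d"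
  shows "((\<lambda>\<tau>. inv \<sigma> \<circ> \<tau>) ` D \<in> cosets d mu) = (D \<in> cosets d mu)"
proof
  have inv1: "\<sigma> \<circ> inv \<sigma> = id" using assms unfolding Sym_def by (simp add: permutes_inv_o)
  assume "(\<lambda>\<tau>. inv \<sigma> \<circ> \<tau>) ` D \<in> cosets d mu"
  then obtain \<rho> where r: "\<rho> \<in> Sym d"
    and e: "(\<lambda>\<tau>. inv \<sigma> \<circ> \<tau>) ` D = (\<lambda>\<tau>. \<rho> \<circ> \<tau>) ` young_subgroup d mu"
    unfolding cosets_def by auto
  have "D = (\<lambda>\<tau>. \<sigma> \<circ> \<tau>) ` ((\<lambda>\<tau>. inv \<sigma> \<circ> \<tau>) ` D)"
  proof -
    have h: "\<And>x. \<sigma> \<circ> (inv \<sigma> \<circ> x) = x" by (metis comp_assoc inv1 id_comp)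
    show ?thesis
    proof (rule set_eqI)
      fix x show "x \<in> D \<longleftrightarrow> x \<in> (\<lambda>\<tau>. \<sigma> \<circ> \<tau>) ` ((\<lambda>\<tau>. inv \<sigma> \<circ> \<tau>) ` D)"
      proof
        assume "x \<in> D"
        then have "\<sigma> \<circ> (inv \<sigma> \<circ> x) \<in> (\<lambda>\<tau>. \<sigma> \<circ> \<tau>) ` ((\<lambda>\<tau>. inv \<sigma> \<circ> \<tau>) ` D)" by (intro imageI)
        then show "x \<in> (\<lambda>\<tau>. \<sigma> \<circ> \<tau>) ` ((\<lambda>\<tau>. inv \<sigma> \<circ> \<tau>) ` D)" by (simp only: h)
      next
        assume "x \<in> (\<lambda>\<tau>. \<sigma> \<circ> \<tau>) ` ((\<lambda>\<tau>. inv \<sigma> \<circ> \<tau>) ` D)"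
        then obtain z where z: "z \<in> (\<lambda>\<tau>. inv \<sigma> \<circ> \<tau>) ` D" and xz: "x = \<sigma> \<circ> z" by (rule imageE)
        from z obtain y where y: "y \<in> D" and zy: "z = inv \<sigma> \<circ> y" by (rule imageE)
        have "x = y" using xz zy h by simp
        then show "x \<in> D" using y by simp
      qed
    qed
  qed
  also have "\<dots> = (\<lambda>\<tau>. (\<sigma> \<circ> \<rho>) \<circ> \<tau>) ` young_subgroup d mu"
    by (simp add: e image_image o_assoc)
  finally show "D \<in> cosets d mu" unfolding cosets_def using Sym_comp[OF assms r] by blast
next
  assume "D \<in> cosets d mu"
  then obtain \<rho> where r: "\<rho> \<in> Sym d"
    and e: "D = (\<lambda>\<tau>. \<rho> \<circ> \<tau>) ` young_subgroup d mu"
    unfolding cosets_def by auto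
  have "(\<lambda>\<tau>. inv \<sigma> \<circ> \<tau>) ` D = (\<lambda>\<tau>. (inv \<sigma> \<circ> \<rho>) \<circ> \<tau>) ` young_subgroup d mu"
    by (simp add: e image_image o_assoc)
  then show "(\<lambda>\<tau>. inv \<sigma> \<circ> \<tau>) ` D \<in> cosets d mu"
    unfolding cosets_def using Sym_comp[OF Sym_inv[OF assms] r] by blast
qed

lemma embedding_of_subgroup:
  assumes sub: "young_subgroup d mu \<subseteq> young_subgroup d lam"
  shows "\<exists>\<phi> :: ((nat \<Rightarrow> nat) set \<Rightarrow> 'k::comm_ring_1) \<Rightarrow> ((nat \<Rightarrow> nat) set \<Rightarrow> 'k).
           kW_embedding d lam mu \<phi>"
proof -
  let ?G = "young_subgroup d lam"
  define \<phi> :: "((nat \<Rightarrow> nat) set \<Rightarrow> 'k) \<Rightarrow> ((nat \<Rightarrow> nat) set \<Rightarrow> 'k)" where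
    "\<phi> v = (\<lambda>D. if D \<in> cosets d mu then v (big ?G D) else 0)" for v
  have hom: "kW_hom d lam mu \<phi>"
    unfolding kW_hom_def
  proof (intro conjI ballI allI)
    fix v :: "(nat \<Rightarrow> nat) set \<Rightarrow> 'k"
    show "\<phi> v \<in> perm_module d mu" unfolding perm_module_def \<phi>_def by auto
  next
    fix u v :: "(nat \<Rightarrow> nat) set \<Rightarrow> 'k"
    show "\<phi> (\<lambda>C. u C + v C) = (\<lambda>C. \<phi> u C + \<phi> v C)"
      unfolding \<phi>_def by auto
  next
    fix c :: 'k and v :: "(nat \<Rightarrow> nat) set \<Rightarrow> 'k"
    show "\<phi> (\<lambda>C. c * v C) = (\<lambda>C. c * \<phi> v C)"
      unfolding \<phi>_def by auto
  next
    fix \<sigma> v assume s: "\<sigma> \<in> Sym d"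
    show "\<phi> (perm_act \<sigma> v) = perm_act \<sigma> (\<phi> v)"
      unfolding \<phi>_def perm_act_def by (auto simp: cosets_act[OF s] big_act)
  qed
  have "inj_on \<phi> (perm_module d lam)"
  proof (rule inj_onI)
    fix u v assume u: "u \<in> perm_module d lam" and v: "v \<in> perm_module d lam"
      and e: "\<phi> u = \<phi> v"
    show "u = v"
    proof
      fix C
      show "u C = v C"
      proof (cases "C \<in> cosets d lam")
        case False then show ?thesis using u v unfolding perm_module_def by auto
      next
        case True
        then obtain s where s: "s \<in> Sym d" and C: "C = (\<lambda>\<tau>. s \<circ> \<tau>) ` ?G"
          unfolding cosets_def by auto
        let ?D = "(\<lambda>\<tau>. s \<circ> \<tau>) ` young_subgroup d mu"
        have D: "?D \<in> cosets d mu" unfolding cosets_def using s by blast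
        have b: "big ?G ?D = C" using big_coset[OF sub] C by simp
        have "\<phi> u ?D = \<phi> v ?D" using e by simp
        then show ?thesis unfolding \<phi>_def using D b by simp
      qed
    qed
  qed
  then show ?thesis using hom unfolding kW_embedding_def by blast
qed

lemma row_alpha:
  assumes "x \<le> d" "r < d"
  shows "row_of (alpha d r) x = x - (d - r)"
  unfolding row_of_def alpha_def
proof (rule Least_equality)
  show "x \<le> sum_list (take (Suc (x - (d - r))) ((d - r) # replicate r 1))"
    using assms by (simp add: sum_list_replicate)
next
  fix i assume "x \<le> sum_list (take (Suc i) ((d - r) # replicate r 1))"
  then show "x - (d - r) \<le> i" by (simp add: sum_list_replicate)
qed

theorem proposition7p4:
  fixes d r :: nat and lam :: "nat list"
  assumes "r \<ge> 1" and "d > r + 1"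
    and "is_partition d lam" and "dominates lam (alpha d r)"
  shows "\<exists>\<phi> :: ((nat \<Rightarrow> nat) set \<Rightarrow> 'k::comm_ring_1) \<Rightarrow> ((nat \<Rightarrow> nat) set \<Rightarrow> 'k).
           kW_embedding d lam (alpha d r) \<phi>"
proof (rule embedding_of_subgroup)
  have dom1: "d - r \<le> sum_list (take 1 lam)"
    using assms(4) unfolding dominates_def by (metis alpha_def One_nat_def sum_list_simps take_Suc_Cons take0 add_0_right sum_list.Nil)
  have row0: "row_of lam j = 0" if "j \<le> d - r" for j
    unfolding row_of_def using dom1 that by (intro Least_eq_0) simp
  show "young_subgroup d (alpha d r) \<subseteq> young_subgroup d lam"
  proof
    fix \<sigma> assume s: "\<sigma> \<in> young_subgroup d (alpha d r)"
    then have p: "\<sigma> permutes {1..d}" and rw: "\<forall>j\<in>{1..d}. row_of (alpha d r) (\<sigma> j) = row_of (alpha d r) j"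
      unfolding young_subgroup_def Sym_def by auto
    have "row_of lam (\<sigma> j) = row_of lam j" if j: "j \<in> {1..d}" for j
    proof -
      have sj: "\<sigma> j \<in> {1..d}" using permutes_in_image[OF p] j by blast
      have "\<sigma> j - (d - r) = j - (d - r)"
        using rw j sj row_alpha[of "\<sigma> j" d r] row_alpha[of j d r] assms(2) by auto
      then have "(j \<le> d - r \<and> \<sigma> j \<le> d - r) \<or> \<sigma> j = j" by linarith
      then show ?thesis using row0 by auto
    qed
    then show "\<sigma> \<in> young_subgroup d lam" using p unfolding young_subgroup_def Sym_def by auto
  qed
qed

end
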